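(* Let $F=H_{(44/31,44/31,3)}:\mathbb{C}^2\to\mathbb{C}^2$ be the map $F(x,y)=\left(x^6+\frac{44}{31}y^3-y,\ y^6+\frac{44}{31}x^3-x\right)$. For $z=(z_1,z_2)\in\mathbb{C}^2$ (at which the matrix below is invertible) let $$M_{-1}(z)=\begin{bmatrix}6z_1^5 & \frac{132}{31}z_2^2-1\\ \frac{132}{31}z_1^2-1 & 6z_2^5\end{bmatrix}^{-1},$$ and for $k\in\{2,\dots,6\}$ let $$M_k(z)=\begin{bmatrix}\binom{6}{k}z_1^{6-k} & \frac{44}{31}\binom{3}{k}z_2^{3-k}\\ \frac{44}{31}\binom{3}{k}z_1^{3-k} & \binom{6}{k}z_2^{6-k}\end{bmatrix},$$ where $\binom{j}{i}=0$ when $i\notin\{0,\dots,j\}$. If $$\sigma\big(M_{-1}(z)M_k(z)\big)<\left(\frac{0.03}{|M_{-1}(z)F(z)|}\right)^{k-1}\quad\text{for all }k\in\{2,\dots,6\},$$ then $\alpha(F,z)<0.03$.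
   Context: For a square matrix $M$, $\sigma(M)$ denotes its largest singular value. For $v\in\mathbb{C}^N$, $|v|=\sqrt{|v_1|^2+\cdots+|v_N|^2}$, and for a multilinear map $\mathcal{L}:(\mathbb{C}^N)^k\to\mathbb{C}^N$, $|\mathcal{L}|=\max_{v^1,\dots,v^k\neq 0}\frac{|\mathcal{L}(v^1,\dots,v^k)|}{|v^1|\cdots|v^k|}$. For an analytic $F:\mathbb{C}^n\to\mathbb{C}^n$ with Jacobian $F'$ and $k$-th derivative $F^{(k)}$ (a symmetric $k$-linear map), Smale's invariants are $\beta(F,z)=|F'(z)^{-1}F(z)|$, $\gamma(F,z)=\sup_{k\ge2}\left|\frac{1}{k!}F'(z)^{-1}F^{(k)}(z)\right|^{1/(k-1)}$, and $\alpha(F,z)=\beta(F,z)\gamma(F,z)$. *)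

theory Defs
  imports "HOL-Analysis.Analysis"
begin

text \<open>k-th derivative as a k-linear map, arguments given as a list of length k,
  via iterated Frechet derivatives.\<close>
fun kderiv :: "nat \<Rightarrow> (complex^2 \<Rightarrow> complex^2) \<Rightarrow> complex^2 \<Rightarrow> (complex^2) list \<Rightarrow> complex^2" where
  "kderiv 0 F z vs = F z"
| "kderiv (Suc k) F z vs = frechet_derivative (\<lambda>w. kderiv k F w (tl vs)) (at z) (hd vs)"

definition mlnorm :: "nat \<Rightarrow> ((complex^2) list \<Rightarrow> complex^2) \<Rightarrow> real" where
  "mlnorm k L = Sup {norm (L vs) / (\<Prod>v\<leftarrow>vs. norm v) | vs. length vs = k \<and> (\<forall>v\<in>set vs. v \<noteq> 0)}"

definition smale_beta :: "(complex^2 \<Rightarrow> complex^2) \<Rightarrow> complex^2 \<Rightarrow> real" where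
  "smale_beta F z = norm (inv (frechet_derivative F (at z)) (F z))"

definition smale_gamma :: "(complex^2 \<Rightarrow> complex^2) \<Rightarrow> complex^2 \<Rightarrow> real" where
  "smale_gamma F z = (SUP k\<in>{2..}. (mlnorm k (\<lambda>vs. (1 / fact k) *\<^sub>R
       inv (frechet_derivative F (at z)) (kderiv k F z vs))) powr (1 / (real k - 1)))"

definition smale_alpha :: "(complex^2 \<Rightarrow> complex^2) \<Rightarrow> complex^2 \<Rightarrow> real" where
  "smale_alpha F z = smale_beta F z * smale_gamma F z"

definition conj_transpose :: "complex^2^2 \<Rightarrow> complex^2^2" where
  "conj_transpose M = (\<chi> i j. cnj (M $ j $ i))"

definition sigma_max :: "complex^2^2 \<Rightarrow> real" where
  "sigma_max M = sqrt (Max {l::real. \<exists>v::complex^2. v \<noteq> 0 \<and>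
       (conj_transpose M ** M) *v v = complex_of_real l *s v})"

definition Fmap :: "complex^2 \<Rightarrow> complex^2" where
  "Fmap z = (\<chi> i. if i = 1 then (z$1)^6 + (44/31) * (z$2)^3 - z$2
                          else (z$2)^6 + (44/31) * (z$1)^3 - z$1)"

definition Jmat :: "complex^2 \<Rightarrow> complex^2^2" where
  "Jmat z = (\<chi> i j. if i = 1 then (if j = 1 then 6 * (z$1)^5 else (132/31) * (z$2)^2 - 1)
                              else (if j = 1 then (132/31) * (z$1)^2 - 1 else 6 * (z$2)^5))"

definition Mk :: "nat \<Rightarrow> complex^2 \<Rightarrow> complex^2^2" where
  "Mk k z = (\<chi> i j. if i = 1 then (if j = 1 then of_nat (6 choose k) * (z$1)^(6-k)
                                          else (44/31) * of_nat (3 choose k) * (z$2)^(3-k))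
                              else (if j = 1 then (44/31) * of_nat (3 choose k) * (z$1)^(3-k)
                                          else of_nat (6 choose k) * (z$2)^(6-k)))"

end

theory Submission
  imports Defs
begin


lemma has_derivative_vec_lambda_my:
  fixes f :: "'a::real_normed_vector \<Rightarrow> 'b::real_normed_vector^'n"
  assumes d: "\<And>i. ((\<lambda>x. f x $ i) has_derivative (\<lambda>h. f' h $ i)) F"
  shows "(f has_derivative f') F"
proof -
  have bl: "\<And>i. bounded_linear (\<lambda>h. f' h $ i)" using d has_derivative_bounded_linear by blast
  have "\<forall>i. \<exists>K. \<forall>x. norm (f' x $ i) \<le> norm x * K"
    using bl bounded_linear.bounded by blast
  then obtain K where K: "\<And>i x. norm (f' x $ i) \<le> norm x * K i" by metis
  have lin: "linear f'"
  proof
    fix x y show "f' (x + y) = f' x + f' y"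
      using bounded_linear.linear[OF bl, THEN linear_add] by (simp add: vec_eq_iff)
  next
    fix r x show "f' (r *\<^sub>R x) = r *\<^sub>R f' x"
      using bounded_linear.linear[OF bl, THEN linear_scale] by (simp add: vec_eq_iff)
  qed
  have "bounded_linear f'"
  proof (rule bounded_linear_intro[where K="\<Sum>i\<in>UNIV. K i"])
    fix x y show "f' (x + y) = f' x + f' y" using lin by (simp add: linear_add)
  next
    fix r x show "f' (r *\<^sub>R x) = r *\<^sub>R f' x" using lin by (simp add: linear_scale)
  next
    fix x
    have "norm (f' x) \<le> (\<Sum>i\<in>UNIV. norm (f' x $ i))"
      unfolding norm_vec_def by (rule L2_set_le_sum) simp
    also have "\<dots> \<le> (\<Sum>i\<in>UNIV. norm x * K i)" by (rule sum_mono) (rule K)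
    also have "\<dots> = norm x * (\<Sum>i\<in>UNIV. K i)" by (simp add: sum_distrib_left)
    finally show "norm (f' x) \<le> norm x * (\<Sum>i\<in>UNIV. K i)" .
  qed
  moreover have "((\<lambda>y. ((f y - f (Lim F (\<lambda>x. x))) - f' (y - Lim F (\<lambda>x. x))) /\<^sub>R norm (y - Lim F (\<lambda>x. x))) \<longlongrightarrow> 0) F"
  proof (rule vec_tendstoI)
    fix i
    from d[of i] have "((\<lambda>y. ((f y $ i - f (Lim F (\<lambda>x. x)) $ i) - f' (y - Lim F (\<lambda>x. x)) $ i) /\<^sub>R norm (y - Lim F (\<lambda>x. x))) \<longlongrightarrow> 0) F"
      unfolding has_derivative_def by blast
    then show "((\<lambda>y. (((f y - f (Lim F (\<lambda>x. x))) - f' (y - Lim F (\<lambda>x. x))) /\<^sub>R norm (y - Lim F (\<lambda>x. x))) $ i) \<longlongrightarrow> 0 $ i) F"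
      by simp
  qed
  ultimately show ?thesis unfolding has_derivative_def by blast
qed

fun fl :: "nat \<Rightarrow> nat \<Rightarrow> nat" where
  "fl n 0 = 1" | "fl n (Suc k) = fl n k * (n - k)"

definition P :: "2 \<Rightarrow> nat \<Rightarrow> (complex^2) list \<Rightarrow> complex" where
  "P j k vs = prod_list (map (\<lambda>v. v $ j) (take k vs))"

definition mnm :: "nat \<Rightarrow> nat \<Rightarrow> 2 \<Rightarrow> complex^2 \<Rightarrow> (complex^2) list \<Rightarrow> complex" where
  "mnm n k j u vs = of_nat (fl n k) * (u $ j) ^ (n - k) * P j k vs"

lemma P_Suc: "P j (Suc k) (h # vs) = h $ j * P j k vs"
  by (simp add: P_def)

lemma mnm_deriv:
  "((\<lambda>u. mnm n k j u vs) has_derivative (\<lambda>h. mnm n (Suc k) j u (h # vs))) (at u)"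
proof -
  have "((\<lambda>u. of_nat (fl n k) * (u $ j) ^ (n - k) * P j k vs) has_derivative
     (\<lambda>h. of_nat (fl n k) * (of_nat (n - k) * h $ j * (u $ j) ^ (n - k - 1)) * P j k vs)) (at u)"
    by (intro derivative_intros bounded_linear.has_derivative[OF bounded_linear_vec_nth])
  then show ?thesis unfolding mnm_def[of n k]
    by (rule has_derivative_eq_rhs) (simp add: fun_eq_iff mnm_def P_Suc mult_ac)
qed

definition Dk :: "nat \<Rightarrow> complex^2 \<Rightarrow> (complex^2) list \<Rightarrow> complex^2" where
  "Dk k u vs = (\<chi> i. if i = 1 then mnm 6 k 1 u vs + 44/31 * mnm 3 k 2 u vs - mnm 1 k 2 u vs
                    else mnm 6 k 2 u vs + 44/31 * mnm 3 k 1 u vs - mnm 1 k 1 u vs)"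

lemma Dk_deriv: "((\<lambda>u. Dk k u vs) has_derivative (\<lambda>h. Dk (Suc k) u (h # vs))) (at u)"
  unfolding Dk_def
proof (rule has_derivative_vec_lambda_my)
  fix i :: 2
  show "((\<lambda>x. (\<chi> i. if i = 1 then mnm 6 k 1 x vs + 44/31 * mnm 3 k 2 x vs - mnm 1 k 2 x vs
                    else mnm 6 k 2 x vs + 44/31 * mnm 3 k 1 x vs - mnm 1 k 1 x vs) $ i) has_derivative
     (\<lambda>h. (\<chi> i. if i = 1 then mnm 6 (Suc k) 1 u (h # vs) + 44/31 * mnm 3 (Suc k) 2 u (h # vs) - mnm 1 (Suc k) 2 u (h # vs)
                    else mnm 6 (Suc k) 2 u (h # vs) + 44/31 * mnm 3 (Suc k) 1 u (h # vs) - mnm 1 (Suc k) 1 u (h # vs)) $ i)) (at u)"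
  proof (cases "i = 1")
    case True then show ?thesis by (simp only: vec_lambda_beta True if_True simp_thms) (intro derivative_intros mnm_deriv)
  next
    case False then show ?thesis by (simp only: vec_lambda_beta False if_False) (intro derivative_intros mnm_deriv)
  qed
qed

lemma Dk_0: "Dk 0 u vs = Fmap u"
  by (simp add: vec_eq_iff Dk_def Fmap_def mnm_def P_def)

lemma kderiv_Dk: "length vs \<ge> k \<Longrightarrow> kderiv k Fmap w vs = Dk k w vs"
proof (induction k arbitrary: w vs)
  case 0 then show ?case by (simp add: Dk_0)
next
  case (Suc k)
  then obtain h t where vs: "vs = h # t" by (cases vs) auto
  with Suc.prems have "length t \<ge> k" by simp
  with Suc.IH have "(\<lambda>u. kderiv k Fmap u t) = (\<lambda>u. Dk k u t)" by auto
  then have "kderiv (Suc k) Fmap w vs = frechet_derivative (\<lambda>u. Dk k u t) (at w) h"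
    using vs by simp
  also have "\<dots> = Dk (Suc k) w (h # t)"
    using frechet_derivative_at[OF Dk_deriv[of k t w]] by metis
  finally show ?case using vs by simp
qed



lemma row_sq:
  fixes w1 w2 v1 v2 :: complex
  shows "(cmod (w1 * v1 + w2 * v2))^2 = (cmod w1)^2 * (cmod v1)^2 + (cmod w2)^2 * (cmod v2)^2
     + 2 * Re (cnj w1 * w2 * cnj v1 * v2)"
  unfolding cmod_power2 by (simp add: power2_eq_square algebra_simps)

lemma cnj_sq: "cnj z * z = (complex_of_real (cmod z))^2"
  by (metis complex_norm_square of_real_power mult.commute)


lemma norm2_vec2: "(norm (x::complex^2))^2 = (cmod (x$1))^2 + (cmod (x$2))^2"
  by (simp add: norm_vec_def L2_set_def sum_2)

lemma amgm_aux:
  fixes p q bb x y :: real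
  assumes "p \<ge> 0" "q \<ge> 0" "bb \<ge> 0" "p * q = bb^2" "x \<ge> 0" "y \<ge> 0"
  shows "2 * bb * x * y \<le> p * x^2 + q * y^2"
proof -
  have "(2 * bb * x * y)^2 \<le> (p * x^2 + q * y^2)^2"
  proof -
    have "(p * x^2 + q * y^2)^2 - (2 * bb * x * y)^2 = (p * x^2 - q * y^2)^2"
      using assms(4) by (simp add: power2_eq_square algebra_simps)
    then show ?thesis by (smt (verit) zero_le_power2)
  qed
  then show ?thesis using assms
    by (meson power2_le_imp_le add_nonneg_nonneg mult_nonneg_nonneg zero_le_power2)
qed

lemma sigma_max_bound:
  fixes A :: "complex^2^2"
  shows "0 \<le> sigma_max A \<and> norm (A *v x) \<le> sigma_max A * norm x"
proof -
  define a where "a = (cmod (A$1$1))^2 + (cmod (A$2$1))^2"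
  define d where "d = (cmod (A$1$2))^2 + (cmod (A$2$2))^2"
  define b where "b = cnj (A$1$1) * A$1$2 + cnj (A$2$1) * A$2$2"
  define D where "D = (a-d)^2 + 4*(cmod b)^2"
  define l where "l = (a + d + sqrt D)/2"
  define l' where "l' = (a + d - sqrt D)/2"
  define B where "B = conj_transpose A ** A"
  define E where "E = {m::real. \<exists>v::complex^2. v \<noteq> 0 \<and> B *v v = complex_of_real m *s v}"
  have a0: "a \<ge> 0" and d0: "d \<ge> 0" unfolding a_def d_def by auto
  have D0: "D \<ge> 0" unfolding D_def by auto
  have sD: "(sqrt D)^2 = D" using D0 by simp
  have sDge: "\<bar>a - d\<bar> \<le> sqrt D" unfolding D_def
    by (metis add_le_cancel_left add_nonneg_nonneg real_sqrt_abs real_sqrt_le_mono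
         mult_nonneg_nonneg zero_le_numeral zero_le_power2 add.right_neutral)
  have la: "l - a \<ge> 0" and ld: "l - d \<ge> 0" using sDge unfolding l_def by auto
  have lprod: "(l - a) * (l - d) = (cmod b)^2"
  proof -
    have "(l - a) * (l - d) = ((sqrt D)^2 - (a - d)^2) / 4" unfolding l_def
      by (simp add: power2_eq_square field_simps)
    then show ?thesis using sD unfolding D_def by simp
  qed
  have l0: "l \<ge> 0" using a0 la by linarith
  have B11: "B$1$1 = complex_of_real a" and B12: "B$1$2 = b" and B21: "B$2$1 = cnj b"
    and B22: "B$2$2 = complex_of_real d"
    unfolding B_def a_def b_def d_def conj_transpose_def matrix_matrix_mult_def
    by (simp_all add: sum_2 cnj_sq)
  have Bv: "B *v v = complex_of_real m *s v \<longleftrightarrow>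
      complex_of_real a * v$1 + b * v$2 = complex_of_real m * v$1 \<and>
      cnj b * v$1 + complex_of_real d * v$2 = complex_of_real m * v$2" for v m
    by (simp add: vec_eq_iff forall_2 matrix_vector_mult_def sum_2 B11 B12 B21 B22)
  have Esub: "E \<subseteq> {l, l'}"
  proof
    fix m assume "m \<in> E"
    then obtain v where v0: "v \<noteq> 0" and e: "B *v v = complex_of_real m *s v" unfolding E_def by blast
    from e have e1: "complex_of_real a * v$1 + b * v$2 = complex_of_real m * v$1"
      and e2: "cnj b * v$1 + complex_of_real d * v$2 = complex_of_real m * v$2" using Bv by auto
    define c where "c = (complex_of_real a - complex_of_real m) * (complex_of_real d - complex_of_real m) - b * cnj b"
    have c1: "c * v$1 = 0"
    proof -
      have "c * v$1 = (complex_of_real d - complex_of_real m) * (complex_of_real a * v$1 + b * v$2 - complex_of_real m * v$1)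
          - b * (cnj b * v$1 + complex_of_real d * v$2 - complex_of_real m * v$2)"
        unfolding c_def by (simp add: algebra_simps)
      then show ?thesis using e1 e2 by simp
    qed
    have c2: "c * v$2 = 0"
    proof -
      have "c * v$2 = (complex_of_real a - complex_of_real m) * (cnj b * v$1 + complex_of_real d * v$2 - complex_of_real m * v$2)
          - cnj b * (complex_of_real a * v$1 + b * v$2 - complex_of_real m * v$1)"
        unfolding c_def by (simp add: algebra_simps)
      then show ?thesis using e1 e2 by simp
    qed
    have "v$1 \<noteq> 0 \<or> v$2 \<noteq> 0" using v0 by (auto simp: vec_eq_iff forall_2)
    then have "c = 0" using c1 c2 by auto
    then have "complex_of_real ((a - m) * (d - m)) = complex_of_real ((cmod b)^2)"
      unfolding c_def complex_norm_square by simp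
    then have q: "(a - m) * (d - m) = (cmod b)^2" using of_real_eq_iff by blast
    have "(2*m - a - d)^2 = D" unfolding D_def using q
      by (simp add: power2_eq_square algebra_simps)
    then have "(2*m - a - d)^2 = (sqrt D)^2" using sD by simp
    then have "2*m - a - d = sqrt D \<or> 2*m - a - d = - sqrt D"
      using power2_eq_iff by blast
    then show "m \<in> {l, l'}" unfolding l_def l'_def by auto
  qed
  then have finE: "finite E" using finite_subset by blast
  have lE: "l \<in> E"
  proof (cases "b = 0")
    case False
    define v :: "complex^2" where "v = (\<chi> i. if i = 1 then b else complex_of_real (l - a))"
    have "v \<noteq> 0" using False unfolding v_def by (auto simp: vec_eq_iff)
    moreover have "B *v v = complex_of_real l *s v"
    proof -
      have "cnj b * b = complex_of_real ((l - a) * (l - d))"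
        using lprod by (simp add: cnj_sq)
      then show ?thesis unfolding Bv v_def
        by (simp add: algebra_simps of_real_mult of_real_diff)
    qed
    ultimately show ?thesis unfolding E_def by blast
  next
    case True
    then have lmax: "l = max a d" unfolding l_def D_def by (simp add: real_sqrt_abs max_def)
    show ?thesis
    proof (cases "a \<ge> d")
      case True
      define v :: "complex^2" where "v = (\<chi> i. if i = 1 then 1 else 0)"
      have "v \<noteq> 0" unfolding v_def by (auto simp: vec_eq_iff)
      moreover have "B *v v = complex_of_real l *s v"
        unfolding Bv v_def using \<open>b = 0\<close> True lmax by simp
      ultimately show ?thesis unfolding E_def by blast
    next
      case False
      define v :: "complex^2" where "v = (\<chi> i. if i = 1 then 0 else 1)"
      have "(2::2) \<noteq> 1" by simp
      then have "v $ 2 \<noteq> 0" unfolding v_def by simp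
      then have "v \<noteq> 0" by auto
      moreover have "B *v v = complex_of_real l *s v"
        unfolding Bv v_def using \<open>b = 0\<close> False lmax by simp
      ultimately show ?thesis unfolding E_def by blast
    qed
  qed
  have sig: "sigma_max A = sqrt (Max E)" unfolding sigma_max_def E_def B_def by simp
  have "l \<le> Max E" using finE lE by simp
  then have sl: "sqrt l \<le> sigma_max A" unfolding sig by simp
  have "(norm (A *v x))^2 \<le> l * (norm x)^2"
  proof -
    let ?x = "cmod (x$1)" and ?y = "cmod (x$2)"
    have "(norm (A *v x))^2 = a * ?x^2 + d * ?y^2 + 2 * Re (b * cnj (x$1) * x$2)"
      unfolding norm2_vec2 a_def d_def b_def
      by (simp add: matrix_vector_mult_def sum_2 row_sq algebra_simps)
    also have "Re (b * cnj (x$1) * x$2) \<le> cmod b * ?x * ?y"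
      by (metis complex_Re_le_cmod complex_mod_cnj norm_mult)
    then have "a * ?x^2 + d * ?y^2 + 2 * Re (b * cnj (x$1) * x$2) \<le> a * ?x^2 + d * ?y^2 + 2 * cmod b * ?x * ?y"
      by simp
    also have "\<dots> \<le> l * (?x^2 + ?y^2)"
      using amgm_aux[OF la ld norm_ge_zero lprod norm_ge_zero norm_ge_zero, of "x$1" "x$2"]
      by (simp add: algebra_simps)
    finally show ?thesis unfolding norm2_vec2 .
  qed
  then have "norm (A *v x) \<le> sqrt l * norm x"
    by (metis l0 norm_ge_zero real_le_rsqrt real_sqrt_mult real_sqrt_abs abs_norm_cancel)
  also have "\<dots> \<le> sigma_max A * norm x" using sl by (simp add: mult_right_mono)
  finally show ?thesis using sl l0 by (meson order_trans real_sqrt_ge_zero)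
qed



definition pv :: "nat \<Rightarrow> (complex^2) list \<Rightarrow> complex^2" where
  "pv k vs = (\<chi> j. P j k vs)"

lemma fl_zero: "n < k \<Longrightarrow> fl n k = 0"
proof (induction k)
  case 0 then show ?case by simp
next
  case (Suc k) then show ?case by (cases "n < k") auto
qed

lemma Dk_zero: "6 < k \<Longrightarrow> Dk k u vs = 0"
  by (simp add: vec_eq_iff Dk_def mnm_def fl_zero)

lemma sc_comp: "(c *\<^sub>R (w::complex^2)) $ i = complex_of_real c * w $ i"
  by (subst vector_scaleR_component) (rule scaleR_conv_of_real)

lemma fl_choose: "k \<in> {2..6} \<Longrightarrow> n \<in> {3,6} \<Longrightarrow> fl n k = (n choose k) * fact k"
proof -
  assume "k \<in> {2..6}" "n \<in> {3,6}"
  then have "k = 2 \<or> k = 3 \<or> k = 4 \<or> k = 5 \<or> k = 6" "n = 3 \<or> n = 6" by auto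
  then show ?thesis by (elim disjE; simp add: numeral_eq_Suc)
qed

lemma Dk_Mk: "k \<in> {2..6} \<Longrightarrow> Dk k u vs = fact k *\<^sub>R (Mk k u *v pv k vs)"
proof -
  assume k: "k \<in> {2..6}"
  have f6: "fl 6 k = (6 choose k) * fact k" and f3: "fl 3 k = (3 choose k) * fact k"
    using fl_choose k by auto
  have f1: "fl (Suc 0) k = 0" using k fl_zero by auto
  show ?thesis
    by (simp add: vec_eq_iff forall_2 Dk_def mnm_def Mk_def pv_def matrix_vector_mult_def sum_2 f6 f3 f1 sc_comp
        scaleR_conv_of_real[where 'a=complex] algebra_simps)
qed

lemma mv_scaleR: "(A::complex^2^2) *v (c *\<^sub>R x) = c *\<^sub>R (A *v x)"
  by (simp add: vec_eq_iff matrix_vector_mult_def sum_2 scaleR_right_distrib)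

lemma hadamard2: "norm (\<chi> j. (v::complex^2) $ j * q $ j) \<le> norm v * norm (q::complex^2)"
proof -
  have "(norm (\<chi> j. v $ j * q $ j))^2 \<le> (norm v * norm q)^2"
    unfolding power_mult_distrib norm2_vec2
    by (simp add: norm_mult power_mult_distrib algebra_simps)
  then show ?thesis by (rule power2_le_imp_le) simp
qed

lemma prod_bound: fixes v :: "complex^2" shows "norm (\<chi> j. prod_list (map (\<lambda>w. w $ j) (v # vs))) \<le> prod_list (map norm (v # vs))"
proof (induction vs arbitrary: v)
  case Nil then show ?case by simp
next
  case (Cons w ws)
  have "norm (\<chi> j. prod_list (map (\<lambda>u. u $ j) (v # w # ws)))
      = norm (\<chi> j. v $ j * (\<chi> j. prod_list (map (\<lambda>u. u $ j) (w # ws))) $ j)" by simp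
  also have "\<dots> \<le> norm v * norm (\<chi> j. prod_list (map (\<lambda>u. u $ j) (w # ws)))" by (rule hadamard2[of v])
  also have "\<dots> \<le> norm v * prod_list (map norm (w # ws))"
    using Cons.IH[of w] by (simp add: mult_left_mono)
  finally show ?case by simp
qed

lemma pv_bound: "length vs = k \<Longrightarrow> k \<ge> 1 \<Longrightarrow> norm (pv k vs) \<le> prod_list (map norm vs)"
  using prod_bound[of "hd vs" "tl vs"] by (cases vs) (auto simp: pv_def P_def)

lemma prod_pos: "(\<forall>v\<in>set vs. (v::complex^2) \<noteq> 0) \<Longrightarrow> prod_list (map norm vs) > 0"
  by (induction vs) auto



theorem proposition5p1:
  fixes z :: "complex^2"
  assumes "invertible (Jmat z)"
    and "\<forall>k\<in>{2..6::nat}. sigma_max (matrix_inv (Jmat z) ** Mk k z)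
           < (0.03 / norm (matrix_inv (Jmat z) *v Fmap z)) ^ (k - 1)"
  shows "smale_alpha Fmap z < 0.03"
proof -
  define J where "J = Jmat z"
  define Ji where "Ji = matrix_inv J"
  have JJi: "J ** Ji = mat 1 \<and> Ji ** J = mat 1"
    using assms(1) unfolding J_def Ji_def invertible_def matrix_inv_def by (rule someI_ex)
  have J1: "Dk (Suc 0) z [h] = J *v h" for h
    by (simp add: vec_eq_iff forall_2 Dk_def mnm_def P_def J_def Jmat_def matrix_vector_mult_def sum_2
        numeral_eq_Suc algebra_simps)
  have Fd: "(Fmap has_derivative (\<lambda>h. J *v h)) (at z)"
    using Dk_deriv[of 0 "[]" z] by (simp add: Dk_0 J1)
  have DF: "frechet_derivative Fmap (at z) = (\<lambda>h. J *v h)"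
    using frechet_derivative_at[OF Fd] by simp
  have INV: "inv (frechet_derivative Fmap (at z)) y = Ji *v y" for y
  proof -
    have inj: "inj (\<lambda>h. J *v h)" using inj_matrix_vector_mult[OF assms(1)] J_def by simp
    have "y = J *v (Ji *v y)" using JJi by (simp add: matrix_vector_mul_assoc)
    then have "inv (\<lambda>h. J *v h) y = inv (\<lambda>h. J *v h) ((\<lambda>h. J *v h) (Ji *v y))" by simp
    also have "\<dots> = Ji *v y" using inv_f_f[OF inj] .
    finally show ?thesis using DF by simp
  qed
  define \<beta> where "\<beta> = norm (Ji *v Fmap z)"
  have beta: "smale_beta Fmap z = \<beta>" unfolding smale_beta_def \<beta>_def INV ..
  show ?thesis
  proof (cases "\<beta> = 0")
    case True then show ?thesis unfolding smale_alpha_def beta by simp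
  next
    case False
    then have b0: "\<beta> > 0" by (simp add: \<beta>_def)
    define X :: real where "X = 0.03 / \<beta>"
    have X0: "X > 0" using b0 X_def by simp
    have hyp: "sigma_max (Ji ** Mk k z) < X ^ (k - 1)" if "k \<in> {2..6}" for k
      using assms(2) that unfolding X_def \<beta>_def Ji_def J_def by blast
    define L where "L k = (\<lambda>vs. (1 / fact k) *\<^sub>R inv (frechet_derivative Fmap (at z)) (kderiv k Fmap z vs))" for k
    define f where "f k = mlnorm k (L k) powr (1 / (real k - 1))" for k
    have gam: "smale_gamma Fmap z = Sup (f ` {2..})" unfolding smale_gamma_def f_def L_def by simp
    have Lform: "L k vs = (1 / fact k) *\<^sub>R (Ji *v Dk k z vs)" if "length vs = k" for k vs
      unfolding L_def INV using kderiv_Dk[of k vs z] that by simp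
    define S where "S k = {norm (L k vs) / prod_list (map norm vs) | vs. length vs = k \<and> (\<forall>v\<in>set vs. v \<noteq> 0)}" for k
    have mlS: "mlnorm k (L k) = Sup (S k)" for k unfolding mlnorm_def S_def ..
    have Sne: "S k \<noteq> {}" for k
    proof -
      have "(1::complex^2) \<noteq> 0" by (simp add: vec_eq_iff)
      then have r: "length (replicate k (1::complex^2)) = k \<and> (\<forall>v\<in>set (replicate k (1::complex^2)). v \<noteq> 0)"
        by (simp add: set_replicate_conv_if)
      have "norm (L k (replicate k 1)) / prod_list (map norm (replicate k (1::complex^2))) \<in> S k"
        unfolding S_def using r by blast
      then show ?thesis by blast
    qed
    have pnn: "0 \<le> prod_list (map norm (vs::(complex^2) list))" for vs
      by (induction vs) auto
    have Snn: "x \<ge> 0" if "x \<in> S k" for x k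
    proof -
      from that obtain vs where "x = norm (L k vs) / prod_list (map norm vs)" unfolding S_def by blast
      then show ?thesis using pnn[of vs] by simp
    qed
    have fbig: "f k = 0" if "k > 6" for k
    proof -
      have "\<forall>x\<in>S k. x = 0"
      proof
        fix x assume "x \<in> S k"
        then obtain vs where vs: "x = norm (L k vs) / prod_list (map norm vs)" "length vs = k" unfolding S_def by blast
        have "L k vs = 0" using Lform[OF vs(2)] Dk_zero[OF that] by simp
        then show "x = 0" using vs(1) by simp
      qed
      then have "S k \<subseteq> {0}" by auto
      then have "S k = {0}" using Sne[of k] subset_singletonD by metis
      then show ?thesis unfolding f_def mlS by simp
    qed
    have fsmall: "f k < X" if k: "k \<in> {2..6}" for k
    proof -
      let ?A = "Ji ** Mk k z"
      have sig0: "0 \<le> sigma_max ?A" using sigma_max_bound by blast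
      have bnd: "x \<le> sigma_max ?A" if "x \<in> S k" for x
      proof -
        from that obtain vs where vs: "x = norm (L k vs) / prod_list (map norm vs)" "length vs = k"
          "\<forall>v\<in>set vs. v \<noteq> 0" unfolding S_def by blast
        have "L k vs = ?A *v pv k vs"
          using Lform[OF vs(2)] Dk_Mk[OF k] by (simp add: mv_scaleR matrix_vector_mul_assoc)
        then have "norm (L k vs) \<le> sigma_max ?A * norm (pv k vs)" using sigma_max_bound by simp
        also have "\<dots> \<le> sigma_max ?A * prod_list (map norm vs)"
          using pv_bound[OF vs(2)] k sig0 by (intro mult_left_mono) auto
        finally show ?thesis using vs(1) prod_pos[OF vs(3)] by (simp add: pos_divide_le_eq)
      qed
      have bdd: "bdd_above (S k)" using bnd by (auto simp: bdd_above_def)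
      have m_le: "mlnorm k (L k) \<le> sigma_max ?A" unfolding mlS using Sne bnd by (intro cSup_least) auto
      obtain x0 where x0: "x0 \<in> S k" using Sne by blast
      have m_ge: "0 \<le> mlnorm k (L k)" unfolding mlS
        using Snn[OF x0] cSup_upper[OF x0 bdd] by linarith
      have kr: "real k - 1 > 0" using k by auto
      have "f k \<le> sigma_max ?A powr (1 / (real k - 1))"
        unfolding f_def using kr m_ge m_le by (intro powr_mono2) auto
      also have "\<dots> < (X ^ (k - 1)) powr (1 / (real k - 1))"
        using kr sig0 hyp[OF k] by (intro powr_less_mono2) auto
      also have "\<dots> = X"
      proof -
        have "X ^ (k - 1) = X powr (real (k - 1))" using X0 by (simp add: powr_realpow)
        moreover have "real (k - 1) = real k - 1" using k by (simp add: of_nat_diff)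
        ultimately show ?thesis using kr X0 by (simp add: powr_powr)
      qed
      finally show ?thesis .
    qed
    have sub: "f ` {2..} \<subseteq> f ` {2..6} \<union> {0}"
    proof
      fix y assume "y \<in> f ` {2..}"
      then obtain k where "k \<ge> 2" "y = f k" by auto
      then show "y \<in> f ` {2..6} \<union> {0}" using fbig by (cases "k \<le> 6") auto
    qed
    have finF: "finite (f ` {2..})" using sub finite_subset by blast
    have neF: "f ` {2..} \<noteq> {}" by auto
    have allF: "\<forall>y\<in>f ` {2..}. y < X"
    proof
      fix y assume "y \<in> f ` {2..}"
      then obtain k where "k \<ge> 2" "y = f k" by auto
      then show "y < X" using fbig fsmall X0 by (cases "k \<le> 6") auto
    qed
    have "smale_gamma Fmap z = Max (f ` {2..})" unfolding gam using finF neF by (rule cSup_eq_Max)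
    also have "\<dots> < X" using finF neF allF by simp
    finally have "smale_gamma Fmap z < X" .
    then have "\<beta> * smale_gamma Fmap z < \<beta> * X" using b0 by simp
    also have "\<beta> * X = 0.03" unfolding X_def using b0 by simp
    finally show ?thesis unfolding smale_alpha_def beta .
  qed
qed

end
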